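(* Let $\varepsilon\colon\mathbf 2\to\mathbf 2^2$ be $\varepsilon(x)=(x,x)$ and $\pi\colon\mathbf 2^2\to\mathbf 2$ be $\pi(x,y)=x\vee y$, where $\mathbf 2=\{0,1\}$; these form a commutative triangle $\mathbf 2\xrightarrow{\varepsilon}\mathbf 2^2\xrightarrow{\pi}\mathbf 2$ with $\pi\circ\varepsilon=\mathrm{id}_{\mathbf 2}$, viewed as a diagram indexed by the three-element chain $0<1<2$. There is no lifting of this diagram, with respect to $\operatorname{Con}_c$, by lattices and lattice homomorphisms $K_0\xrightarrow{e}L\xrightarrow{p}K_1$ in which the morphism $f=p\circ e\colon K_0\to K_1$ lifting $\mathrm{id}_{\mathbf 2}$ is an isomorphism.
   Context: $\mathbf 2$ and $\mathbf 2^2$ are regarded as $\{\vee,0\}$-semilattices. $\operatorname{Con}_c$ sends a lattice to its $\{\vee,0\}$-semilattice of compact (finitely generated) congruences and a lattice homomorphism $f\colon K\to L$ to the map sending a compact congruence $\alpha$ of $K$ to the congruence of $L$ generated by $\{(f(x),f(y)):(x,y)\in\alpha\}$. A diagram of lattices lifts a diagram of semilattices of the same shape if its image under $\operatorname{Con}_c$ is naturally isomorphic to it. *)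

theory Defs
  imports Main
begin

definition lat_cong :: "('a::lattice \<times> 'a) set \<Rightarrow> bool" where
  "lat_cong \<theta> \<longleftrightarrow> equiv UNIV \<theta> \<and>
     (\<forall>a b c. (a, b) \<in> \<theta> \<longrightarrow> (sup a c, sup b c) \<in> \<theta> \<and> (inf a c, inf b c) \<in> \<theta>)"

definition Cg :: "('a::lattice \<times> 'a) set \<Rightarrow> ('a \<times> 'a) set" where
  "Cg X = \<Inter>{\<theta>. lat_cong \<theta> \<and> X \<subseteq> \<theta>}"

definition Con_c :: "('a::lattice \<times> 'a) set set" where
  "Con_c = {Cg X | X. finite X}"

definition cjoin :: "('a::lattice \<times> 'a) set \<Rightarrow> ('a \<times> 'a) set \<Rightarrow> ('a \<times> 'a) set" where
  "cjoin \<alpha> \<beta> = Cg (\<alpha> \<union> \<beta>)"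

definition czero :: "('a::lattice \<times> 'a) set" where
  "czero = Cg {}"

definition Con_c_map :: "('a::lattice \<Rightarrow> 'b::lattice) \<Rightarrow> ('a \<times> 'a) set \<Rightarrow> ('b \<times> 'b) set" where
  "Con_c_map f \<alpha> = Cg ((\<lambda>(x, y). (f x, f y)) ` \<alpha>)"

definition lattice_hom :: "('a::lattice \<Rightarrow> 'b::lattice) \<Rightarrow> bool" where
  "lattice_hom f \<longleftrightarrow> (\<forall>x y. f (sup x y) = sup (f x) (f y) \<and> f (inf x y) = inf (f x) (f y))"

text \<open>2 = bool with join = disjunction and 0 = False; 2^2 = bool \<times> bool componentwise.\<close>
definition eps2 :: "bool \<Rightarrow> bool \<times> bool" where
  "eps2 x = (x, x)"

definition pi2 :: "bool \<times> bool \<Rightarrow> bool" where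
  "pi2 z = (fst z \<or> snd z)"

definition iso_to_2 :: "(('a::lattice \<times> 'a) set \<Rightarrow> bool) \<Rightarrow> bool" where
  "iso_to_2 \<phi> \<longleftrightarrow> bij_betw \<phi> Con_c (UNIV :: bool set) \<and>
     (\<forall>\<alpha>\<in>Con_c. \<forall>\<beta>\<in>Con_c. \<phi> (cjoin \<alpha> \<beta>) = (\<phi> \<alpha> \<or> \<phi> \<beta>)) \<and> \<phi> czero = False"

definition iso_to_22 :: "(('a::lattice \<times> 'a) set \<Rightarrow> bool \<times> bool) \<Rightarrow> bool" where
  "iso_to_22 \<phi> \<longleftrightarrow> bij_betw \<phi> Con_c (UNIV :: (bool \<times> bool) set) \<and>
     (\<forall>\<alpha>\<in>Con_c. \<forall>\<beta>\<in>Con_c.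
        \<phi> (cjoin \<alpha> \<beta>) = (fst (\<phi> \<alpha>) \<or> fst (\<phi> \<beta>), snd (\<phi> \<alpha>) \<or> snd (\<phi> \<beta>))) \<and>
     \<phi> czero = (False, False)"

end

theory Submission
  imports Defs
begin

lemma Cg_least: "lat_cong \<theta> \<Longrightarrow> X \<subseteq> \<theta> \<Longrightarrow> Cg X \<subseteq> \<theta>"
  unfolding Cg_def by blast

lemma Cg_sup: "X \<subseteq> Cg X"
  unfolding Cg_def by blast

lemma lat_congI:
  assumes r: "\<And>x. (x, x) \<in> Q" and s: "\<And>x y. (x, y) \<in> Q \<Longrightarrow> (y, x) \<in> Q"
    and t: "\<And>x y z. (x, y) \<in> Q \<Longrightarrow> (y, z) \<in> Q \<Longrightarrow> (x, z) \<in> Q"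
    and c: "\<And>a b c. (a, b) \<in> Q \<Longrightarrow> (sup a c, sup b c) \<in> Q \<and> (inf a c, inf b c) \<in> Q"
  shows "lat_cong Q"
proof -
  have "refl_on UNIV Q" unfolding refl_on_def using r by simp
  moreover have "sym Q" unfolding sym_def using s by metis
  moreover have "trans Q" unfolding trans_def using t by metis
  ultimately show ?thesis unfolding lat_cong_def equiv_def by (intro conjI allI impI; simp add: c)
qed

lemma cong_props:
  assumes c: "lat_cong \<theta>"
  shows "(x, x) \<in> \<theta>" "(x,y) \<in> \<theta> \<Longrightarrow> (y,x) \<in> \<theta>"
    "(x,y) \<in> \<theta> \<Longrightarrow> (y,z) \<in> \<theta> \<Longrightarrow> (x,z) \<in> \<theta>"
    "(x,y) \<in> \<theta> \<Longrightarrow> (sup x z, sup y z) \<in> \<theta>"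
    "(x,y) \<in> \<theta> \<Longrightarrow> (inf x z, inf y z) \<in> \<theta>"
proof -
  have e: "equiv UNIV \<theta>" and cc: "\<forall>a b c. (a, b) \<in> \<theta> \<longrightarrow> (sup a c, sup b c) \<in> \<theta> \<and> (inf a c, inf b c) \<in> \<theta>"
    using c unfolding lat_cong_def by auto
  have r: "refl \<theta>" and s: "sym \<theta>" and t: "trans \<theta>" using e unfolding equiv_def by auto
  show "(x, x) \<in> \<theta>" using r unfolding refl_on_def by simp
  show "(x,y) \<in> \<theta> \<Longrightarrow> (y,x) \<in> \<theta>" using s by (rule symD)
  show "(x,y) \<in> \<theta> \<Longrightarrow> (y,z) \<in> \<theta> \<Longrightarrow> (x,z) \<in> \<theta>" using t by (rule transD)
  show "(x,y) \<in> \<theta> \<Longrightarrow> (sup x z, sup y z) \<in> \<theta>" using cc by blast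
  show "(x,y) \<in> \<theta> \<Longrightarrow> (inf x z, inf y z) \<in> \<theta>" using cc by blast
qed

lemma Inter_cong: assumes a: "\<forall>\<theta>\<in>S. lat_cong \<theta>" shows "lat_cong (\<Inter>S)"
proof (rule lat_congI)
  show "(x, x) \<in> \<Inter>S" for x
    by (rule InterI) (metis a cong_props(1))
  show "(y, x) \<in> \<Inter>S" if "(x, y) \<in> \<Inter>S" for x y
    by (rule InterI) (metis a cong_props(2) that InterD)
  show "(x, z) \<in> \<Inter>S" if "(x, y) \<in> \<Inter>S" "(y, z) \<in> \<Inter>S" for x y z
    by (rule InterI) (metis a cong_props(3) that InterD)
  show "(sup x z, sup y z) \<in> \<Inter>S \<and> (inf x z, inf y z) \<in> \<Inter>S" if "(x, y) \<in> \<Inter>S" for x y z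
    by (intro conjI InterI) (metis a cong_props(4,5) that InterD)+
qed

lemma Cg_cong: "lat_cong (Cg X)"
  unfolding Cg_def by (rule Inter_cong) simp

lemma cong_Id: "lat_cong \<theta> \<Longrightarrow> Id \<subseteq> \<theta>"
  using cong_props(1) by auto

lemma Id_cong: "lat_cong (Id :: ('a::lattice \<times> 'a) set)"
  by (rule lat_congI) auto

lemma Cg_id: "lat_cong \<theta> \<Longrightarrow> Cg \<theta> = \<theta>"
  by (rule equalityI[OF Cg_least[OF _ subset_refl] Cg_sup])

lemma Cg_sub_Id: "S \<subseteq> Id \<Longrightarrow> Cg S = Id"
  by (rule equalityI[OF Cg_least[OF Id_cong] cong_Id[OF Cg_cong]])

lemma pre_cong:
  assumes h: "lattice_hom p" and c: "lat_cong \<theta>"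
  shows "lat_cong {(x,y). (p x, p y) \<in> \<theta>}"
proof -
  have R: "\<And>x. (x, x) \<in> \<theta>" and S: "\<And>x y. (x,y) \<in> \<theta> \<Longrightarrow> (y,x) \<in> \<theta>"
    and T: "\<And>x y z. (x,y) \<in> \<theta> \<Longrightarrow> (y,z) \<in> \<theta> \<Longrightarrow> (x,z) \<in> \<theta>"
    and C: "\<And>x y z. (x,y) \<in> \<theta> \<Longrightarrow> (sup x z, sup y z) \<in> \<theta> \<and> (inf x z, inf y z) \<in> \<theta>"
    using c unfolding lat_cong_def equiv_def refl_on_def sym_def trans_def by blast+
  have hs: "\<And>x y. p (sup x y) = sup (p x) (p y)" and hi: "\<And>x y. p (inf x y) = inf (p x) (p y)"
    using h unfolding lattice_hom_def by blast+
  show ?thesis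
  proof (rule lat_congI)
    show "(x, x) \<in> {(x,y). (p x, p y) \<in> \<theta>}" for x using R by simp
    show "(y, x) \<in> {(x,y). (p x, p y) \<in> \<theta>}" if "(x, y) \<in> {(x,y). (p x, p y) \<in> \<theta>}" for x y
      using S that by simp
    show "(x, z) \<in> {(x,y). (p x, p y) \<in> \<theta>}" if "(x, y) \<in> {(x,y). (p x, p y) \<in> \<theta>}"
      "(y, z) \<in> {(x,y). (p x, p y) \<in> \<theta>}" for x y z
      using T that by simp
    show "(sup a c, sup b c) \<in> {(x,y). (p x, p y) \<in> \<theta>} \<and> (inf a c, inf b c) \<in> {(x,y). (p x, p y) \<in> \<theta>}"
      if "(a, b) \<in> {(x,y). (p x, p y) \<in> \<theta>}" for a b c
      using C[of "p a" "p b" "p c"] that hs hi by simp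
  qed
qed

lemma Cg_img:
  assumes h: "lattice_hom p"
  shows "Cg ((\<lambda>(x, y). (p x, p y)) ` Cg X) = Cg ((\<lambda>(x, y). (p x, p y)) ` X)"
proof
  let ?P = "(\<lambda>(x, y). (p x, p y))"
  have "?P ` X \<subseteq> ?P ` Cg X" using Cg_sup by blast
  also have "\<dots> \<subseteq> Cg (?P ` Cg X)" by (rule Cg_sup)
  finally show "Cg (?P ` X) \<subseteq> Cg (?P ` Cg X)" using Cg_least Cg_cong by blast
  have R: "lat_cong {(x,y). (p x, p y) \<in> Cg (?P ` X)}" by (rule pre_cong[OF h Cg_cong])
  have "X \<subseteq> {(x,y). (p x, p y) \<in> Cg (?P ` X)}" using Cg_sup by fastforce
  hence "Cg X \<subseteq> {(x,y). (p x, p y) \<in> Cg (?P ` X)}" using Cg_least[OF R] by blast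
  hence "?P ` Cg X \<subseteq> Cg (?P ` X)" by auto
  thus "Cg (?P ` Cg X) \<subseteq> Cg (?P ` X)" using Cg_least Cg_cong by blast
qed

lemma memP: "(a, b) \<in> \<theta> \<Longrightarrow> (p a, p b) \<in> (\<lambda>(x, y). (p x, p y)) ` \<theta>"
  by (rule image_eqI[where x="(a,b)"]) auto

lemma img_cong:
  assumes h: "lattice_hom p" and b: "bij p" and c: "lat_cong \<theta>"
  shows "lat_cong ((\<lambda>(x, y). (p x, p y)) ` \<theta>)"
proof -
  have inj: "inj p" and surj: "surj p" using b by (auto simp: bij_def)
  have R: "\<And>x. (x, x) \<in> \<theta>" and S: "\<And>x y. (x,y) \<in> \<theta> \<Longrightarrow> (y,x) \<in> \<theta>"
    and T: "\<And>x y z. (x,y) \<in> \<theta> \<Longrightarrow> (y,z) \<in> \<theta> \<Longrightarrow> (x,z) \<in> \<theta>"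
    and C: "\<And>x y z. (x,y) \<in> \<theta> \<Longrightarrow> (sup x z, sup y z) \<in> \<theta> \<and> (inf x z, inf y z) \<in> \<theta>"
    using c unfolding lat_cong_def equiv_def refl_on_def sym_def trans_def by blast+
  have hs: "\<And>x y. p (sup x y) = sup (p x) (p y)" and hi: "\<And>x y. p (inf x y) = inf (p x) (p y)"
    using h unfolding lattice_hom_def by blast+
  let ?Q = "(\<lambda>(x, y). (p x, p y)) ` \<theta>"
  have "(x, x) \<in> ?Q" for x
  proof -
    obtain x' where "x = p x'" using surj by blast
    thus ?thesis using memP[OF R[of x']] by simp
  qed
  moreover have "(y, x) \<in> ?Q" if "(x, y) \<in> ?Q" for x y
  proof -
    from that obtain a b where "(a,b) \<in> \<theta>" "x = p a" "y = p b" by auto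
    thus ?thesis using memP[OF S] by simp
  qed
  moreover have "(x, z) \<in> ?Q" if "(x, y) \<in> ?Q" "(y, z) \<in> ?Q" for x y z
  proof -
    from that obtain a b b' d where 1: "(a,b) \<in> \<theta>" "x = p a" "y = p b" "(b',d) \<in> \<theta>" "y = p b'" "z = p d" by auto
    have "b = b'" using inj 1 by (simp add: inj_eq)
    thus ?thesis using memP[OF T[OF 1(1)], of d p] 1 by simp
  qed
  moreover have "(sup a c', sup b c') \<in> ?Q \<and> (inf a c', inf b c') \<in> ?Q" if "(a, b) \<in> ?Q" for a b c'
  proof -
    from that obtain x y where xy: "(x,y) \<in> \<theta>" "a = p x" "b = p y" by auto
    obtain z where z: "c' = p z" using surj by blast
    have "(sup x z, sup y z) \<in> \<theta>" "(inf x z, inf y z) \<in> \<theta>" using C[OF xy(1)] by auto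
    moreover have "sup a c' = p (sup x z)" "sup b c' = p (sup y z)"
      "inf a c' = p (inf x z)" "inf b c' = p (inf y z)" using xy z hs hi by simp_all
    ultimately show ?thesis using memP[of _ _ \<theta> p] by simp
  qed
  ultimately show ?thesis by (rule lat_congI) blast+
qed

theorem theorem8p1:
  fixes e :: "'k0::lattice \<Rightarrow> 'l::lattice" and p :: "'l \<Rightarrow> 'k1::lattice"
  shows "\<not> (lattice_hom e \<and> lattice_hom p \<and> bij (p \<circ> e) \<and>
    (\<exists>(\<phi>0 :: ('k0 \<times> 'k0) set \<Rightarrow> bool) (\<phi>1 :: ('l \<times> 'l) set \<Rightarrow> bool \<times> bool)
       (\<phi>2 :: ('k1 \<times> 'k1) set \<Rightarrow> bool).
       iso_to_2 \<phi>0 \<and> iso_to_22 \<phi>1 \<and> iso_to_2 \<phi>2 \<and>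
       (\<forall>\<alpha>\<in>Con_c. \<phi>1 (Con_c_map e \<alpha>) = eps2 (\<phi>0 \<alpha>)) \<and>
       (\<forall>\<beta>\<in>Con_c. \<phi>2 (Con_c_map p \<beta>) = pi2 (\<phi>1 \<beta>)) \<and>
       (\<forall>\<alpha>\<in>Con_c. \<phi>2 (Con_c_map (p \<circ> e) \<alpha>) = \<phi>0 \<alpha>)))"
proof
  assume A: "lattice_hom e \<and> lattice_hom p \<and> bij (p \<circ> e) \<and>
    (\<exists>(\<phi>0 :: ('k0 \<times> 'k0) set \<Rightarrow> bool) (\<phi>1 :: ('l \<times> 'l) set \<Rightarrow> bool \<times> bool)
       (\<phi>2 :: ('k1 \<times> 'k1) set \<Rightarrow> bool).
       iso_to_2 \<phi>0 \<and> iso_to_22 \<phi>1 \<and> iso_to_2 \<phi>2 \<and>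
       (\<forall>\<alpha>\<in>Con_c. \<phi>1 (Con_c_map e \<alpha>) = eps2 (\<phi>0 \<alpha>)) \<and>
       (\<forall>\<beta>\<in>Con_c. \<phi>2 (Con_c_map p \<beta>) = pi2 (\<phi>1 \<beta>)) \<and>
       (\<forall>\<alpha>\<in>Con_c. \<phi>2 (Con_c_map (p \<circ> e) \<alpha>) = \<phi>0 \<alpha>))"
  then have hp: "lattice_hom p" and bpe: "bij (p \<circ> e)" by blast+
  from A obtain \<phi>1 :: "('l \<times> 'l) set \<Rightarrow> bool \<times> bool" and \<phi>2 :: "('k1 \<times> 'k1) set \<Rightarrow> bool"
    where i1: "iso_to_22 \<phi>1" and i2: "iso_to_2 \<phi>2"
      and cp: "\<forall>\<beta>\<in>Con_c. \<phi>2 (Con_c_map p \<beta>) = pi2 (\<phi>1 \<beta>)" by blast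
  let ?P = "(\<lambda>(x, y). (p x, p y))"
  have b1: "bij_betw \<phi>1 Con_c UNIV" and z1: "\<phi>1 czero = (False, False)"
    using i1 unfolding iso_to_22_def by blast+
  have b2: "bij_betw \<phi>2 Con_c UNIV" and z2: "\<phi>2 czero = False"
    using i2 unfolding iso_to_2_def by blast+
  have czL: "(czero :: ('l \<times> 'l) set) \<in> Con_c" unfolding czero_def Con_c_def by auto
  have czId: "(czero :: ('l \<times> 'l) set) = Id" unfolding czero_def by (rule Cg_sub_Id) auto
  have czId2: "(czero :: ('k1 \<times> 'k1) set) = Id" unfolding czero_def by (rule Cg_sub_Id) auto
  have injp: "inj p"
  proof (rule injI)
    fix u v assume uv: "p u = p v"
    let ?g = "Cg {(u, v)}"
    have gC: "?g \<in> Con_c" unfolding Con_c_def by blast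
    have "?g \<subseteq> {(x,y). (p x, p y) \<in> Id}"
      using Cg_least[OF pre_cong[OF hp Id_cong]] uv by auto
    hence "?P ` ?g \<subseteq> Id" by auto
    hence "Con_c_map p ?g = czero" unfolding Con_c_map_def czId2 by (rule Cg_sub_Id)
    hence "pi2 (\<phi>1 ?g) = False" using cp gC z2 by metis
    hence "\<phi>1 ?g = \<phi>1 czero" using z1 unfolding pi2_def by (cases "\<phi>1 ?g") auto
    hence "?g = czero" using b1 gC czL unfolding bij_betw_def by (meson inj_onD)
    hence "(u, v) \<in> Id" using Cg_sup[of "{(u,v)}"] czId by blast
    thus "u = v" by simp
  qed
  have "surj p" using bpe unfolding bij_def unfolding surj_def comp_def by blast
  hence bp: "bij p" using injp by (simp add: bij_def)
  have injP: "inj ?P" using injp unfolding inj_def by auto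
  obtain a where aC: "a \<in> Con_c" and af: "\<phi>1 a = (True, False)"
    using b1 unfolding bij_betw_def by (metis UNIV_I imageE)
  obtain b where bC: "b \<in> Con_c" and bf: "\<phi>1 b = (False, True)"
    using b1 unfolding bij_betw_def by (metis UNIV_I imageE)
  have key: "Con_c_map p g \<in> Con_c \<and> Con_c_map p g = ?P ` g" if gC: "g \<in> Con_c" for g
  proof -
    obtain X where X: "g = Cg X" "finite X" using gC unfolding Con_c_def by blast
    have "Con_c_map p g = Cg (?P ` X)" unfolding Con_c_map_def X(1) by (rule Cg_img[OF hp])
    moreover have "Con_c_map p g = ?P ` g" unfolding Con_c_map_def
      by (rule Cg_id[OF img_cong[OF hp bp]]) (simp add: X Cg_cong)
    moreover have "Cg (?P ` X) \<in> Con_c" unfolding Con_c_def using X(2) by blast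
    ultimately show ?thesis by simp
  qed
  have "\<phi>2 (Con_c_map p a) = \<phi>2 (Con_c_map p b)" using cp aC bC af bf unfolding pi2_def by simp
  moreover have inj2: "inj_on \<phi>2 Con_c" using b2 by (simp add: bij_betw_def)
  ultimately have "Con_c_map p a = Con_c_map p b"
    using inj_onD[of \<phi>2 Con_c "Con_c_map p a" "Con_c_map p b"] key[OF aC] key[OF bC] by blast
  hence "?P ` a = ?P ` b" using key[OF aC] key[OF bC] by simp
  hence "a = b" using injP by (simp add: inj_image_eq_iff)
  thus False using af bf by simp
qed

end
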